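(* Let $0\le k\le n$. There are exactly $k(n-k)+1$ isomorphism classes of matroids of rank $k$ on $n$ elements of the form $\mathsf{U}_{0,m}\oplus\mathsf{U}_{k-\ell,n-\ell-m}\oplus\mathsf{U}_{\ell,\ell}$, and the Tutte polynomials of representatives of these classes are linearly independent in $\mathbb{Z}[x,y]$.
   Context: $\mathsf{U}_{r,m}$ is the uniform matroid of rank $r$ on $m$ elements. *)

theory Defs
  imports "HOL-Computational_Algebra.Polynomial"
begin

type_synonym 'a matroid = "'a set \<times> ('a set \<Rightarrow> bool)"

definition ground :: "'a matroid \<Rightarrow> 'a set" where
  "ground M = fst M"

definition indep :: "'a matroid \<Rightarrow> 'a set \<Rightarrow> bool" where
  "indep M = snd M"

definition is_matroid :: "'a matroid \<Rightarrow> bool" where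
  "is_matroid M \<longleftrightarrow>
     finite (ground M) \<and>
     indep M {} \<and>
     (\<forall>A. indep M A \<longrightarrow> A \<subseteq> ground M) \<and>
     (\<forall>A B. indep M B \<and> A \<subseteq> B \<longrightarrow> indep M A) \<and>
     (\<forall>A B. indep M A \<and> indep M B \<and> card A < card B \<longrightarrow>
        (\<exists>x \<in> B - A. indep M (insert x A)))"

definition rk :: "'a matroid \<Rightarrow> 'a set \<Rightarrow> nat" where
  "rk M A = Max (card ` {B. B \<subseteq> A \<and> indep M B})"

definition matroid_rank :: "'a matroid \<Rightarrow> nat" where
  "matroid_rank M = rk M (ground M)"

definition matroid_iso :: "'a matroid \<Rightarrow> 'b matroid \<Rightarrow> bool" where
  "matroid_iso M N \<longleftrightarrow>
     (\<exists>f. bij_betw f (ground M) (ground N) \<and>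
          (\<forall>A \<subseteq> ground M. indep M A \<longleftrightarrow> indep N (f ` A)))"

definition uniform_matroid :: "nat \<Rightarrow> 'a set \<Rightarrow> 'a matroid" where
  "uniform_matroid r S = (S, \<lambda>A. A \<subseteq> S \<and> card A \<le> r)"

text \<open>Direct sum (intended for matroids on disjoint ground sets).\<close>
definition direct_sum :: "'a matroid \<Rightarrow> 'a matroid \<Rightarrow> 'a matroid" where
  "direct_sum M N = (ground M \<union> ground N,
     \<lambda>A. A \<subseteq> ground M \<union> ground N \<and> indep M (A \<inter> ground M) \<and> indep N (A \<inter> ground N))"

text \<open>Concrete realisation of U_{0,m} \<oplus> U_{k-l,n-l-m} \<oplus> U_{l,l} on ground set {0..<n},
  with blocks {0..<m}, {m..<n-l}, {n-l..<n}.\<close>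
definition form_matroid :: "nat \<Rightarrow> nat \<Rightarrow> nat \<times> nat \<Rightarrow> nat matroid" where
  "form_matroid k n p = (case p of (l, m) \<Rightarrow>
     direct_sum (direct_sum (uniform_matroid 0 {0..<m}) (uniform_matroid (k - l) {m..<n - l}))
                (uniform_matroid l {n - l..<n}))"

text \<open>Admissible parameters: 0 \<le> l \<le> k and 0 \<le> k - l \<le> n - l - m, i.e. m \<le> n - k.\<close>
definition form_params :: "nat \<Rightarrow> nat \<Rightarrow> (nat \<times> nat) set" where
  "form_params k n = {(l, m). l \<le> k \<and> m + k \<le> n}"

definition iso_class :: "'a matroid \<Rightarrow> nat matroid set" where
  "iso_class M = {N. is_matroid N \<and> matroid_iso N M}"

definition form_classes :: "nat \<Rightarrow> nat \<Rightarrow> nat matroid set set" where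
  "form_classes k n = (\<lambda>p. iso_class (form_matroid k n p)) ` form_params k n"

text \<open>Tutte polynomial in Z[x][y] = Z[x,y]: the outer variable is y, the inner one is x.
  T_M(x,y) = sum over A \<subseteq> E of (x-1)^(r(E)-r(A)) (y-1)^(|A|-r(A)).\<close>
definition tutte_poly :: "'a matroid \<Rightarrow> int poly poly" where
  "tutte_poly M = (\<Sum>A \<in> Pow (ground M).
      [:[:-1, 1:]:] ^ (rk M (ground M) - rk M A) * [:-1, 1:] ^ (card A - rk M A))"

definition int_lin_indep :: "('i \<Rightarrow> int poly poly) \<Rightarrow> 'i set \<Rightarrow> bool" where
  "int_lin_indep f I \<longleftrightarrow>
     (\<forall>c :: 'i \<Rightarrow> int. (\<Sum>i\<in>I. of_int (c i) * f i) = 0 \<longrightarrow> (\<forall>i\<in>I. c i = 0))"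

end

theory Submission
  imports Defs
begin

definition PM :: "'a set \<Rightarrow> 'a set \<Rightarrow> 'a set \<Rightarrow> nat \<Rightarrow> 'a matroid" where
  "PM L Mi C a = ((L \<union> Mi) \<union> C, \<lambda>A. A \<subseteq> (L \<union> Mi) \<union> C \<and> A \<inter> L = {} \<and> card (A \<inter> Mi) \<le> a)"

definition disj3 :: "'a set \<Rightarrow> 'a set \<Rightarrow> 'a set \<Rightarrow> bool" where
  "disj3 L Mi C \<longleftrightarrow> finite L \<and> finite Mi \<and> finite C \<and> L \<inter> Mi = {} \<and> L \<inter> C = {} \<and> Mi \<inter> C = {}"

lemma PM_ground: "ground (PM L Mi C a) = L \<union> Mi \<union> C"
  by (simp add: PM_def ground_def)

lemma PM_indep: "indep (PM L Mi C a) A \<longleftrightarrow> A \<subseteq> L \<union> Mi \<union> C \<and> A \<inter> L = {} \<and> card (A \<inter> Mi) \<le> a"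
  by (simp add: PM_def indep_def)

lemma PM_card_split:
  assumes "disj3 L Mi C" "B \<subseteq> L \<union> Mi \<union> C" "B \<inter> L = {}"
  shows "card B = card (B \<inter> Mi) + card (B \<inter> C)"
proof -
  have "B = (B \<inter> Mi) \<union> (B \<inter> C)" using assms(2,3) by blast
  moreover have "finite B" using assms unfolding disj3_def by (meson finite_Un finite_subset)
  ultimately show ?thesis using assms(1) unfolding disj3_def
    by (metis card_Un_disjoint disjoint_iff finite_Int inf.cobounded2 subset_iff Int_iff)
qed

lemma PM_rk:
  assumes d: "disj3 L Mi C" and A: "A \<subseteq> L \<union> Mi \<union> C"
  shows "rk (PM L Mi C a) A = card (A \<inter> C) + min (card (A \<inter> Mi)) a"
proof -
  have fA: "finite A" using assms unfolding disj3_def by (meson finite_Un finite_subset)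
  let ?S = "{B. B \<subseteq> A \<and> indep (PM L Mi C a) B}"
  have fin: "finite (card ` ?S)" using fA by auto
  have ub: "y \<le> card (A \<inter> C) + min (card (A \<inter> Mi)) a" if yS: "y \<in> card ` ?S" for y
  proof -
    obtain B where B0: "B \<in> ?S" "y = card B" using yS by (rule imageE)
    then have B: "B \<subseteq> A" "indep (PM L Mi C a) B" "y = card B" by simp_all
    have i: "B \<subseteq> L \<union> Mi \<union> C" "B \<inter> L = {}" "card (B \<inter> Mi) \<le> a" using B(2) by (auto simp: PM_indep)
    have "card B = card (B \<inter> Mi) + card (B \<inter> C)" using PM_card_split[OF d i(1,2)] .
    moreover have "card (B \<inter> Mi) \<le> card (A \<inter> Mi)" "card (B \<inter> C) \<le> card (A \<inter> C)"
      using B(1) fA by (auto intro!: card_mono)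
    ultimately show ?thesis using i(3) B(3) by linarith
  qed
  obtain D where D: "D \<subseteq> A \<inter> Mi" "card D = min (card (A \<inter> Mi)) a" "finite D"
    using obtain_subset_with_card_n[of "min (card (A \<inter> Mi)) a" "A \<inter> Mi"] by auto
  let ?B = "D \<union> (A \<inter> C)"
  have DC: "D \<inter> (A \<inter> C) = {}" using D(1) d unfolding disj3_def by blast
  have BM: "?B \<inter> Mi = D" using D(1) d unfolding disj3_def by blast
  have BL: "?B \<inter> L = {}" using D(1) d unfolding disj3_def by blast
  have "indep (PM L Mi C a) ?B" using BM BL D A by (auto simp: PM_indep)
  moreover have "card ?B = card (A \<inter> C) + min (card (A \<inter> Mi)) a"
    using D DC fA by (simp add: card_Un_disjoint)
  ultimately have mem: "card (A \<inter> C) + min (card (A \<inter> Mi)) a \<in> card ` ?S" using D(1)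
    by (smt (verit, ccfv_threshold) Int_lower1 image_iff le_sup_iff mem_Collect_eq order_trans)
  show ?thesis unfolding rk_def
    by (rule Max_eqI[OF fin ub mem])
qed

lemma PM_matroid:
  assumes d: "disj3 L Mi C"
  shows "is_matroid (PM L Mi C a)"
  unfolding is_matroid_def
proof (intro conjI allI impI)
  show "finite (ground (PM L Mi C a))" using d by (simp add: PM_ground disj3_def)
  show "indep (PM L Mi C a) {}" by (simp add: PM_indep)
  show "\<And>A. indep (PM L Mi C a) A \<Longrightarrow> A \<subseteq> ground (PM L Mi C a)" by (simp add: PM_indep PM_ground)
  have fM: "finite Mi" using d by (simp add: disj3_def)
  show "indep (PM L Mi C a) A" if "indep (PM L Mi C a) B \<and> A \<subseteq> B" for A B
  proof -
    have "card (A \<inter> Mi) \<le> card (B \<inter> Mi)" using that fM by (intro card_mono) auto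
    then show ?thesis using that by (auto simp: PM_indep)
  qed
  show "\<exists>x\<in>B - A. indep (PM L Mi C a) (insert x A)"
    if h: "indep (PM L Mi C a) A \<and> indep (PM L Mi C a) B \<and> card A < card B" for A B
  proof -
    have iA: "A \<subseteq> L \<union> Mi \<union> C" "A \<inter> L = {}" "card (A \<inter> Mi) \<le> a" using h by (auto simp: PM_indep)
    have iB: "B \<subseteq> L \<union> Mi \<union> C" "B \<inter> L = {}" "card (B \<inter> Mi) \<le> a" using h by (auto simp: PM_indep)
    show ?thesis
    proof (cases "\<exists>x \<in> (B \<inter> C) - A. True")
      case True
      then obtain x where x: "x \<in> B \<inter> C" "x \<notin> A" by auto
      have "insert x A \<inter> Mi = A \<inter> Mi" using x d unfolding disj3_def by blast
      moreover have "insert x A \<inter> L = {}" using x iA d unfolding disj3_def by blast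
      ultimately have "indep (PM L Mi C a) (insert x A)" using iA x by (auto simp: PM_indep)
      then show ?thesis using x by blast
    next
      case False
      then have BC: "B \<inter> C \<subseteq> A \<inter> C" by blast
      have fC: "finite C" using d by (simp add: disj3_def)
      have "card (B \<inter> C) \<le> card (A \<inter> C)" using BC fC by (intro card_mono) auto
      moreover have "card A = card (A \<inter> Mi) + card (A \<inter> C)" using PM_card_split[OF d iA(1,2)] .
      moreover have "card B = card (B \<inter> Mi) + card (B \<inter> C)" using PM_card_split[OF d iB(1,2)] .
      ultimately have lt: "card (A \<inter> Mi) < card (B \<inter> Mi)" using h by linarith
      then have "\<not> B \<inter> Mi \<subseteq> A \<inter> Mi" using fM
        by (meson card_mono finite_Int leD)
      then obtain x where x: "x \<in> B \<inter> Mi" "x \<notin> A" by blast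
      have "insert x A \<inter> Mi = insert x (A \<inter> Mi)" using x by blast
      then have "card (insert x A \<inter> Mi) = Suc (card (A \<inter> Mi))" using x fM by simp
      moreover have "insert x A \<inter> L = {}" using x iA d unfolding disj3_def by blast
      ultimately have "indep (PM L Mi C a) (insert x A)" using iA x lt iB(3) iB(1) by (auto simp: PM_indep)
      then show ?thesis using x by blast
    qed
  qed
qed

lemma form_PM:
  assumes "l \<le> k" "m + k \<le> n"
  shows "form_matroid k n (l, m) = PM {0..<m} {m..<n - l} {n - l..<n} (k - l)"
proof -
  have c: "card (A \<inter> {n - l..<n}) \<le> l" for A
    by (metis card_atLeastLessThan card_mono diff_diff_cancel finite_atLeastLessThan inf_le2 le_trans assms(1,2) le_add2 order_refl)
  have h1: "(X \<inter> ({0..<m} \<union> {m..<n - l})) \<inter> {m..<n - l} = X \<inter> {m..<n-l}" for X :: "nat set"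
    by auto
  have h2: "(X \<inter> ({0..<m} \<union> {m..<n - l})) \<inter> {0..<m} = X \<inter> {0..<m}" for X :: "nat set"
    by auto
  show ?thesis
    unfolding form_matroid_def PM_def direct_sum_def uniform_matroid_def ground_def indep_def
    using c by (auto simp: fun_eq_iff h1 h2)
qed

lemma disj3_form: "m \<le> n - l \<Longrightarrow> disj3 {0..<m} {m..<n - l} {n - l..<(n::nat)}"
  by (auto simp: disj3_def)

lemma form_ground_eq:
  assumes "l \<le> k" "m + k \<le> (n::nat)"
  shows "{0..<m} \<union> {m..<n - l} \<union> {n - l..<n} = {0..<n}"
proof -
  have "m \<le> n - l" using assms by linarith
  then show ?thesis by auto
qed

lemma form_degenerate:
  assumes "l \<le> k" "m + k \<le> n" "l = k \<or> m = n - k"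
  shows "form_matroid k n (l, m) = form_matroid k n (k, n - k)"
proof -
  have e1: "form_matroid k n (l, m) = PM {0..<m} {m..<n - l} {n - l..<n} (k - l)" using form_PM assms by blast
  have e2: "form_matroid k n (k, n-k) = PM {0..<n-k} {n-k..<n - k} {n - k..<n} (k - k)" using form_PM assms by simp
  have g: "{0..<m} \<union> {m..<n - l} \<union> {n - l..<n} = {0..<n-k} \<union> {n-k..<n - k} \<union> {n - k..<n}"
    using assms by auto
  have i: "(A \<subseteq> {0..<m} \<union> {m..<n - l} \<union> {n - l..<n} \<and> A \<inter> {0..<m} = {} \<and> card (A \<inter> {m..<n - l}) \<le> k - l)
     \<longleftrightarrow> (A \<subseteq> {0..<n-k} \<union> {n-k..<n - k} \<union> {n - k..<n} \<and> A \<inter> {0..<n-k} = {} \<and> card (A \<inter> {n-k..<n - k}) \<le> k - k)" for A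
  proof (cases "l = k")
    case True
    then show ?thesis using assms
      by (auto simp: card_eq_0_iff)
  next
    case False
    then have m: "m = n - k" using assms by auto
    have "card (A \<inter> {m..<n - l}) \<le> card {m..<n-l}" by (intro card_mono) auto
    also have "\<dots> = k - l" using m assms by simp
    finally show ?thesis using m assms by auto
  qed
  show ?thesis unfolding e1 e2 PM_def using g i by (auto simp: fun_eq_iff)
qed

lemma form_props:
  assumes "l \<le> k" "m + k \<le> n"
  shows "is_matroid (form_matroid k n (l, m))" "card (ground (form_matroid k n (l, m))) = n"
    "matroid_rank (form_matroid k n (l, m)) = k"
proof -
  show "is_matroid (form_matroid k n (l, m))" unfolding form_PM[OF assms] by (rule PM_matroid[OF disj3_form]) (use assms in linarith)
  show "card (ground (form_matroid k n (l, m))) = n" unfolding form_PM[OF assms] PM_ground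
    using form_ground_eq[OF assms] by simp
  show "matroid_rank (form_matroid k n (l, m)) = k" unfolding form_PM[OF assms] matroid_rank_def PM_ground
    using assms form_ground_eq[OF assms] by (subst PM_rk[OF disj3_form]) (auto simp: Int_absorb1)
qed

abbreviation Xp :: "int poly poly" where "Xp \<equiv> [:[:-1, 1:]:]"
abbreviation Yp :: "int poly poly" where "Yp \<equiv> [:-1, 1:]"

definition Tab :: "nat \<Rightarrow> nat \<Rightarrow> int poly poly" where
  "Tab a b = (\<Sum>i\<le>b. of_nat (b choose i) * (Xp ^ (a - min i a) * Yp ^ (i - min i a)))"

lemma sum_Pow_Un:
  assumes "finite S" "finite T" "S \<inter> T = {}"
  shows "(\<Sum>A\<in>Pow (S \<union> T). h A) = (\<Sum>A\<in>Pow S. \<Sum>B\<in>Pow T. h (A \<union> B))"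
proof -
  have im: "Pow (S \<union> T) = (\<lambda>(A, B). A \<union> B) ` (Pow S \<times> Pow T)"
  proof
    show "Pow (S \<union> T) \<subseteq> (\<lambda>(A, B). A \<union> B) ` (Pow S \<times> Pow T)"
    proof
      fix X assume "X \<in> Pow (S \<union> T)"
      then have "X = (X \<inter> S) \<union> (X \<inter> T)" "(X \<inter> S, X \<inter> T) \<in> Pow S \<times> Pow T" by auto
      then show "X \<in> (\<lambda>(A, B). A \<union> B) ` (Pow S \<times> Pow T)" by (metis (no_types, lifting) case_prod_conv image_eqI)
    qed
  qed auto
  have inj: "inj_on (\<lambda>(A, B). A \<union> B) (Pow S \<times> Pow T)"
  proof (rule inj_onI, clarify)
    fix A B A' B' assume h: "A \<subseteq> S" "B \<subseteq> T" "A' \<subseteq> S" "B' \<subseteq> T" "A \<union> B = A' \<union> B'"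
    have "A = (A \<union> B) \<inter> S" "A' = (A' \<union> B') \<inter> S" "B = (A \<union> B) \<inter> T" "B' = (A' \<union> B') \<inter> T"
      using h assms(3) by auto
    then show "A = A' \<and> B = B'" using h(5) by metis
  qed
  have "(\<Sum>A\<in>Pow (S \<union> T). h A) = (\<Sum>p\<in>Pow S \<times> Pow T. h (case p of (A, B) \<Rightarrow> A \<union> B))"
    unfolding im by (subst sum.reindex[OF inj]) (simp add: comp_def)
  also have "\<dots> = (\<Sum>(A, B)\<in>Pow S \<times> Pow T. h (A \<union> B))"
    by (rule sum.cong) auto
  also have "\<dots> = (\<Sum>A\<in>Pow S. \<Sum>B\<in>Pow T. h (A \<union> B))"
    by (rule sum.cartesian_product[symmetric])
  finally show ?thesis .
qed

lemma sum_Pow_card: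
  assumes "finite S"
  shows "(\<Sum>A\<in>Pow S. g (card A)) = (\<Sum>i\<le>card S. of_nat (card S choose i) * (g i :: 'b :: comm_ring_1))"
proof -
  have "(\<Sum>A\<in>Pow S. g (card A)) = (\<Sum>i\<le>card S. \<Sum>A\<in>{A. A \<in> Pow S \<and> card A = i}. g (card A))"
    by (rule sum.group[symmetric]) (use assms card_mono in auto)
  also have "\<dots> = (\<Sum>i\<le>card S. of_nat (card S choose i) * g i)"
  proof (rule sum.cong[OF refl])
    fix i
    have "(\<Sum>A\<in>{A. A \<in> Pow S \<and> card A = i}. g (card A)) = (\<Sum>A\<in>{A. A \<in> Pow S \<and> card A = i}. g i)"
      by (rule sum.cong) auto
    also have "\<dots> = of_nat (card {A. A \<subseteq> S \<and> card A = i}) * g i" by simp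
    also have "\<dots> = of_nat (card S choose i) * g i" using n_subsets[OF assms] by simp
    finally show "(\<Sum>A\<in>{A. A \<in> Pow S \<and> card A = i}. g (card A)) = of_nat (card S choose i) * g i" .
  qed
  finally show ?thesis .
qed

lemma PM_tutte:
  assumes d: "disj3 L Mi C" and a: "a \<le> card Mi"
  shows "tutte_poly (PM L Mi C a) = (Xp + 1) ^ card C * ((Yp + 1) ^ card L * Tab a (card Mi))"
proof -
  have fL: "finite L" and fM: "finite Mi" and fC: "finite C" and dLM: "L \<inter> Mi = {}" and dLC: "L \<inter> C = {}"
    and dMC: "Mi \<inter> C = {}" using d by (auto simp: disj3_def)
  let ?G = "L \<union> Mi \<union> C"
  have rG: "rk (PM L Mi C a) ?G = card C + a"
  proof -
    have "?G \<inter> C = C" "?G \<inter> Mi = Mi" by auto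
    then show ?thesis using PM_rk[OF d, of ?G a] a by simp
  qed
  define t2 where "t2 i = Xp ^ (a - min i a) * Yp ^ (i - min i a)" for i
  have trm: "Xp ^ (rk (PM L Mi C a) ?G - rk (PM L Mi C a) (A1 \<union> A2 \<union> A3)) *
        Yp ^ (card (A1 \<union> A2 \<union> A3) - rk (PM L Mi C a) (A1 \<union> A2 \<union> A3))
      = Yp ^ card A1 * (t2 (card A2) * Xp ^ (card C - card A3))"
    if h: "A1 \<subseteq> L" "A2 \<subseteq> Mi" "A3 \<subseteq> C" for A1 A2 A3
  proof -
    let ?A = "A1 \<union> A2 \<union> A3"
    have i1: "?A \<inter> C = A3" "?A \<inter> Mi = A2" using h dLM dLC dMC by auto
    have r: "rk (PM L Mi C a) ?A = card A3 + min (card A2) a"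
      using PM_rk[OF d, of ?A a] h i1 by auto
    have f: "finite A1" "finite A2" "finite A3" using h fL fM fC finite_subset by blast+
    have c: "card ?A = card A1 + card A2 + card A3"
      using h dLM dLC dMC f by (subst card_Un_disjoint, auto)+
    have c3: "card A3 \<le> card C" using h fC card_mono by blast
    have e1: "card C + a - (card A3 + min (card A2) a) = (card C - card A3) + (a - min (card A2) a)"
      using c3 by auto
    have e2: "card A1 + card A2 + card A3 - (card A3 + min (card A2) a) = card A1 + (card A2 - min (card A2) a)"
      by auto
    show ?thesis unfolding rG r c e1 e2 t2_def power_add by (simp add: mult_ac)
  qed
  have "tutte_poly (PM L Mi C a) = (\<Sum>A\<in>Pow ((L \<union> Mi) \<union> C).
      Xp ^ (rk (PM L Mi C a) ?G - rk (PM L Mi C a) A) * Yp ^ (card A - rk (PM L Mi C a) A))"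
    unfolding tutte_poly_def PM_ground by simp
  also have "\<dots> = (\<Sum>A1\<in>Pow L. \<Sum>A2\<in>Pow Mi. \<Sum>A3\<in>Pow C. Yp ^ card A1 * (t2 (card A2) * Xp ^ (card C - card A3)))"
    using fL fM fC dLM dLC dMC
    apply (simp add: sum_Pow_Un Int_Un_distrib2)
    apply (intro sum.cong refl)
    apply (rule trm)
    apply auto
    done
  also have "\<dots> = (\<Sum>A1\<in>Pow L. Yp ^ card A1 * (\<Sum>A2\<in>Pow Mi. t2 (card A2) * (\<Sum>A3\<in>Pow C. Xp ^ (card C - card A3))))"
    by (simp add: sum_distrib_left)
  also have "\<dots> = (\<Sum>A1\<in>Pow L. Yp ^ card A1 * ((\<Sum>A2\<in>Pow Mi. t2 (card A2)) * (\<Sum>A3\<in>Pow C. Xp ^ (card C - card A3))))"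
    by (simp add: sum_distrib_right)
  also have "\<dots> = (\<Sum>A1\<in>Pow L. Yp ^ card A1) * ((\<Sum>A2\<in>Pow Mi. t2 (card A2)) * (\<Sum>A3\<in>Pow C. Xp ^ (card C - card A3)))"
    by (simp add: sum_distrib_right)
  also have "(\<Sum>A1\<in>Pow L. Yp ^ card A1) = (Yp + 1) ^ card L"
    using sum_Pow_card[OF fL, of "\<lambda>i. Yp ^ i"] binomial_ring[of Yp 1 "card L"] by simp
  also have "(\<Sum>A3\<in>Pow C. Xp ^ (card C - card A3)) = (Xp + 1) ^ card C"
    using sum_Pow_card[OF fC, of "\<lambda>i. Xp ^ (card C - i)"] binomial_ring[of 1 Xp "card C"] by (simp add: add.commute)
  also have "(\<Sum>A2\<in>Pow Mi. t2 (card A2)) = Tab a (card Mi)"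
    using sum_Pow_card[OF fM, of t2] unfolding Tab_def t2_def by simp
  finally show ?thesis by (simp add: mult_ac)
qed

definition cf :: "int poly poly \<Rightarrow> nat \<Rightarrow> nat \<Rightarrow> int" where
  "cf P p q = coeff (coeff P q) p"

lemma cf_add: "cf (P + Q) p q = cf P p q + cf Q p q" by (simp add: cf_def)
lemma cf_sum: "cf (\<Sum>x\<in>S. f x) p q = (\<Sum>x\<in>S. cf (f x) p q)" by (simp add: cf_def coeff_sum)
lemma cf_of_int: "cf (of_int c * P) p q = c * cf P p q"
  by (simp add: cf_def of_int_poly)
lemma cf_of_nat: "cf (of_nat c * P) p q = of_nat c * cf P p q"
  by (simp add: cf_def of_nat_poly)

lemma const_pow: "[:c::'a::comm_semiring_1:] ^ l = [:c ^ l:]"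
  by (induct l) (auto simp: one_pCons mult.commute)

lemma Xp1_pow: "(Xp + 1) ^ l = [:monom 1 l:]"
proof -
  have "Xp + 1 = [:monom 1 1:]" by (simp add: monom_Suc one_pCons)
  then show ?thesis by (simp add: monom_power const_pow)
qed

lemma Yp1_pow: "(Yp + 1) ^ m = monom 1 m"
proof -
  have "Yp + 1 = monom 1 1" by (simp add: monom_Suc one_pCons monom_0)
  then show ?thesis by (simp add: monom_power)
qed

lemma cf_shift: "cf ([:monom 1 l:] * (monom 1 m * T)) p q = (if l \<le> p \<and> m \<le> q then cf T (p - l) (q - m) else 0)"
  by (simp add: cf_def coeff_monom_mult)

lemma Yp_pow_const: "0 < i \<Longrightarrow> coeff (coeff (Yp ^ v) j) i = 0"
proof (induct v arbitrary: j)
  case 0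
  then show ?case by (simp add: coeff_1)
next
  case (Suc v)
  have "Yp ^ Suc v = - (Yp ^ v) + pCons 0 (Yp ^ v)"
    by (simp add: mult_pCons_left algebra_simps)
  then show ?case using Suc by (simp add: coeff_pCons split: nat.split)
qed

lemma coeff_const': "coeff [:c:] n = (if n = 0 then c else 0)"
  by (cases n) auto

lemma Xp_pow: "Xp ^ u = [:[:-1, 1:] ^ u:]"
  by (rule const_pow)

lemma Tab_mixed:
  assumes "0 < i" "0 < j"
  shows "cf (Tab a b) i j = 0"
  unfolding Tab_def cf_sum
proof (rule sum.neutral, intro ballI)
  fix t
  show "cf (of_nat (b choose t) * (Xp ^ (a - min t a) * Yp ^ (t - min t a))) i j = 0"
  proof (cases "t \<le> a")
    case True
    then show ?thesis using assms by (simp add: cf_of_nat cf_def Xp_pow of_nat_poly coeff_const')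
  next
    case False
    then have "cf (Xp ^ (a - min t a) * Yp ^ (t - min t a)) i j = 0"
      using assms Yp_pow_const[of i] by (simp add: cf_def)
    then show ?thesis unfolding cf_of_nat by simp
  qed
qed

lemma cf00: "cf P 0 0 = poly (poly P 0) 0"
  by (simp add: cf_def poly_0_coeff_0)

lemma sign_lemma: "(-1::int) ^ (a - min t a) * (-1) ^ (t - min t a) = (-1) ^ a * (-1) ^ t"
proof -
  have sq: "(-1::int) ^ x * (-1) ^ x = 1" for x
    by (simp add: power_mult_distrib[symmetric])
  show ?thesis
  proof (cases "t \<le> a")
    case True
    have "(-1::int) ^ a = (-1) ^ (a - t) * (-1) ^ t"
      by (subst power_add[symmetric]) (simp add: True)
    then show ?thesis using True sq[of t] by (simp add: mult.assoc)
  next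
    case False
    have "(-1::int) ^ t = (-1) ^ (t - a) * (-1) ^ a"
      by (subst power_add[symmetric]) (use False in simp)
    then show ?thesis using False sq[of a] by (simp add: mult_ac)
  qed
qed

lemma Tab_00:
  assumes "0 < b"
  shows "cf (Tab a b) 0 0 = 0"
proof -
  have "cf (Tab a b) 0 0 = (\<Sum>t\<le>b. of_nat (b choose t) * ((-1) ^ (a - min t a) * (-1) ^ (t - min t a)))"
    unfolding cf00 Tab_def by (simp add: poly_sum)
  also have "\<dots> = (-1) ^ a * (\<Sum>t\<le>b. (-1) ^ t * of_nat (b choose t))"
    unfolding sign_lemma by (simp add: sum_distrib_left mult_ac)
  also have "\<dots> = 0" using choose_alternating_sum[OF assms] by simp
  finally show ?thesis .
qed

definition Fp :: "nat \<Rightarrow> nat \<Rightarrow> int poly" where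
  "Fp b a = (\<Sum>t\<le>a. of_nat (b choose t) * [:-1, 1:] ^ (a - t))"

lemma Fp_Suc: "Fp b (Suc a) = [:-1, 1:] * Fp b a + of_nat (b choose Suc a)"
proof -
  have "Fp b (Suc a) = (\<Sum>t\<le>a. of_nat (b choose t) * [:-1, 1:] ^ (Suc a - t)) + of_nat (b choose Suc a)"
    unfolding Fp_def by simp
  also have "(\<Sum>t\<le>a. of_nat (b choose t) * [:-1, 1:] ^ (Suc a - t)) = [:-1, 1:] * Fp b a"
    unfolding Fp_def sum_distrib_left
    by (rule sum.cong) (auto simp: Suc_diff_le mult_ac)
  finally show ?thesis .
qed

lemma coeff_lin0: "coeff ([:-1, 1:] * p) 0 = - coeff (p :: int poly) 0"
  by (simp add: mult_pCons_left)
lemma coeff_lin1: "coeff ([:-1, 1:] * p) (Suc n) = - coeff (p :: int poly) (Suc n) + coeff p n"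
  by (simp add: mult_pCons_left)

lemma Fp_coeff0: "coeff (Fp (Suc (Suc B)) a) 0 = of_nat (Suc B choose a)"
proof (induct a)
  case 0
  then show ?case by (simp add: Fp_def)
next
  case (Suc a)
  then show ?case by (simp add: Fp_Suc coeff_lin0 of_nat_poly)
qed

lemma Fp_coeff1: "coeff (Fp (Suc (Suc B)) a) 1 = (if a = 0 then 0 else of_nat (B choose (a - 1)))"
proof (induct a)
  case 0
  then show ?case by (simp add: Fp_def)
next
  case (Suc a)
  have "coeff (Fp (Suc (Suc B)) (Suc a)) 1 = - coeff (Fp (Suc (Suc B)) a) 1 + coeff (Fp (Suc (Suc B)) a) 0"
    by (simp add: Fp_Suc coeff_lin1[of _ 0, simplified] of_nat_poly)
  also have "\<dots> = of_nat (B choose a)"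
    using Suc by (cases a) (simp_all add: Fp_coeff0)
  finally show ?case by simp
qed

lemma Tab_10:
  assumes "0 < a" "a < b"
  shows "cf (Tab a b) 1 0 \<noteq> 0"
proof -
  define g where "g t = (of_nat (b choose t) * ([:-1, 1:] ^ (a - min t a) * (-1) ^ (t - min t a)) :: int poly)" for t
  have "cf (Tab a b) 1 0 = coeff (poly (Tab a b) 0) 1" by (simp add: cf_def poly_0_coeff_0)
  also have "poly (Tab a b) 0 = (\<Sum>t\<le>b. g t)" unfolding Tab_def g_def by (simp add: poly_sum)
  also have "coeff (\<Sum>t\<le>b. g t) 1 = (\<Sum>t\<le>b. coeff (g t) 1)" by (simp add: coeff_sum)
  also have "\<dots> = (\<Sum>t\<le>a. coeff (g t) 1)"
  proof (rule sum.mono_neutral_right)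
    show "\<forall>i\<in>{..b} - {..a}. coeff (g i) 1 = 0"
    proof
      fix i assume "i \<in> {..b} - {..a}"
      then have "a - min i a = 0" by auto
      have m1: "(-1 :: int poly) = [:-1:]" by (rule poly_eqI) (simp add: coeff_const' coeff_1)
      have pw: "(-1::int poly) ^ k = [:(-1) ^ k:]" for k unfolding m1 by (rule const_pow)
      have "g i = [:of_nat (b choose i) * (-1) ^ (i - min i a):]"
        unfolding g_def \<open>a - min i a = 0\<close> pw by (simp add: of_nat_poly)
      then show "coeff (g i) 1 = 0" by (simp add: coeff_const')
    qed
  qed (use assms in auto)
  also have "\<dots> = coeff (Fp b a) 1"
    unfolding Fp_def coeff_sum g_def by (rule sum.cong) auto
  finally have e: "cf (Tab a b) 1 0 = coeff (Fp b a) 1" .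
  define B where "B = b - 2"
  have B: "b = Suc (Suc B)" using assms unfolding B_def by simp
  have "a - 1 \<le> B" using assms B by auto
  then show ?thesis using e B assms Fp_coeff1[of B a] by simp
qed

lemma iso_rk:
  assumes f: "bij_betw f (ground N) (ground M)"
    and ind: "\<forall>A \<subseteq> ground N. indep N A \<longleftrightarrow> indep M (f ` A)"
    and A: "A \<subseteq> ground N"
  shows "rk M (f ` A) = rk N A"
proof -
  have inj: "inj_on f (ground N)" using f bij_betw_imp_inj_on by blast
  have "card ` {B. B \<subseteq> f ` A \<and> indep M B} = card ` {B. B \<subseteq> A \<and> indep N B}"
  proof
    show "card ` {B. B \<subseteq> f ` A \<and> indep M B} \<subseteq> card ` {B. B \<subseteq> A \<and> indep N B}"
    proof
      fix x assume "x \<in> card ` {B. B \<subseteq> f ` A \<and> indep M B}"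
      then obtain B' where B': "B' \<subseteq> f ` A" "indep M B'" "x = card B'" by blast
      define B where "B = A \<inter> f -` B'"
      have fB: "f ` B = B'" using B' unfolding B_def by blast
      have BA: "B \<subseteq> A" unfolding B_def by blast
      then have "indep N B" using ind A fB B'(2) by auto
      moreover have "card B = x" using B'(3) fB inj BA A
        by (metis card_image inj_on_subset order_trans)
      ultimately show "x \<in> card ` {B. B \<subseteq> A \<and> indep N B}" using BA by blast
    qed
  next
    show "card ` {B. B \<subseteq> A \<and> indep N B} \<subseteq> card ` {B. B \<subseteq> f ` A \<and> indep M B}"
    proof
      fix x assume "x \<in> card ` {B. B \<subseteq> A \<and> indep N B}"
      then obtain B where B: "B \<subseteq> A" "indep N B" "x = card B" by blast
      have "indep M (f ` B)" using ind B A by auto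
      moreover have "card (f ` B) = x" using B inj A
        by (metis card_image inj_on_subset order_trans)
      moreover have "f ` B \<subseteq> f ` A" using B by blast
      ultimately show "x \<in> card ` {B. B \<subseteq> f ` A \<and> indep M B}" by blast
    qed
  qed
  then show ?thesis unfolding rk_def by simp
qed

lemma iso_tutte:
  assumes "matroid_iso N M"
  shows "tutte_poly N = tutte_poly M"
proof -
  obtain f where f: "bij_betw f (ground N) (ground M)"
    and ind: "\<forall>A \<subseteq> ground N. indep N A \<longleftrightarrow> indep M (f ` A)"
    using assms unfolding matroid_iso_def by blast
  have inj: "inj_on f (ground N)" using f bij_betw_imp_inj_on by blast
  have gM: "f ` ground N = ground M" using f bij_betw_imp_surj_on by blast
  have rG: "rk M (ground M) = rk N (ground N)" using iso_rk[OF f ind, of "ground N"] gM by simp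
  have "tutte_poly M = (\<Sum>A\<in>Pow (ground N).
      Xp ^ (rk M (ground M) - rk M (f ` A)) * Yp ^ (card (f ` A) - rk M (f ` A)))"
    unfolding tutte_poly_def by (rule sum.reindex_bij_betw[OF bij_betw_Pow[OF f], symmetric])
  also have "\<dots> = tutte_poly N"
    unfolding tutte_poly_def
  proof (rule sum.cong[OF refl])
    fix A assume "A \<in> Pow (ground N)"
    then have A: "A \<subseteq> ground N" by simp
    have "card (f ` A) = card A" using inj A by (metis card_image inj_on_subset)
    then show "Xp ^ (rk M (ground M) - rk M (f ` A)) * Yp ^ (card (f ` A) - rk M (f ` A)) =
      Xp ^ (rk N (ground N) - rk N A) * Yp ^ (card A - rk N A)"
      using iso_rk[OF f ind A] rG by simp
  qed
  finally show ?thesis by simp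
qed

lemma form_tutte:
  assumes "l \<le> k" "m + k \<le> n"
  shows "tutte_poly (form_matroid k n (l, m)) = [:monom 1 l:] * (monom 1 m * Tab (k - l) (n - l - m))"
proof -
  have d: "disj3 {0..<m} {m..<n - l} {n - l..<n}" using assms by (intro disj3_form) linarith
  have a: "k - l \<le> card {m..<n - l}" using assms by simp
  show ?thesis unfolding form_PM[OF assms] PM_tutte[OF d a] Xp1_pow Yp1_pow
    using assms by simp
qed

lemma Tab_0_0: "Tab 0 0 = 1"
  by (simp add: Tab_def)

definition keys :: "nat \<Rightarrow> nat \<Rightarrow> (nat \<times> nat) set" where
  "keys k n = {(l, m). l < k \<and> m < n - k} \<union> {(k, n - k)}"

lemma keys_params: "k \<le> n \<Longrightarrow> key \<in> keys k n \<Longrightarrow> key \<in> form_params k n"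
  by (auto simp: keys_def form_params_def)

lemma finite_keys: "finite (keys k n)"
proof -
  have "keys k n \<subseteq> {..k} \<times> {..n}" by (auto simp: keys_def)
  then show ?thesis by (rule finite_subset) auto
qed

lemma cf_TT:
  assumes "k \<le> n" "key \<in> keys k n"
  shows "cf (tutte_poly (form_matroid k n key)) p q =
    (if fst key \<le> p \<and> snd key \<le> q then cf (Tab (k - fst key) (n - fst key - snd key)) (p - fst key) (q - snd key) else 0)"
proof -
  obtain l m where key: "key = (l, m)" by force
  have "l \<le> k" "m + k \<le> n" using assms keys_params[OF assms] key by (auto simp: form_params_def)
  then show ?thesis unfolding key form_tutte[OF \<open>l \<le> k\<close> \<open>m + k \<le> n\<close>] cf_shift by simp
qed

lemma lin_keys:
  assumes kn: "k \<le> n"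
    and z: "(\<Sum>key\<in>keys k n. of_int (c key) * tutte_poly (form_matroid k n key)) = 0"
  shows "\<forall>key\<in>keys k n. c key = 0"
proof -
  let ?K = "keys k n"
  let ?T = "\<lambda>key. tutte_poly (form_matroid k n key)"
  have cfz: "(\<Sum>key\<in>?K. c key * cf (?T key) p q) = 0" for p q
  proof -
    have "cf (\<Sum>key\<in>?K. of_int (c key) * ?T key) p q = 0" using z by (simp add: cf_def)
    then show ?thesis by (simp add: cf_sum cf_of_int)
  qed
  define S where "S = {key \<in> ?K. c key \<noteq> 0 \<and> fst key < k}"
  have nd: "S = {}"
  proof (rule ccontr)
    assume ne: "S \<noteq> {}"
    have fS: "finite S" using finite_keys unfolding S_def by auto
    define m0 where "m0 = Min (snd ` S)"
    define S0 where "S0 = {key \<in> S. snd key = m0}"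
    have "m0 \<in> snd ` S" unfolding m0_def using fS ne by (intro Min_in) auto
    then have ne0: "S0 \<noteq> {}" unfolding S0_def by auto
    have fS0: "finite S0" using fS unfolding S0_def by auto
    define l0 where "l0 = Min (fst ` S0)"
    have "l0 \<in> fst ` S0" unfolding l0_def using fS0 ne0 by (intro Min_in) auto
    then have inS: "(l0, m0) \<in> S" unfolding S0_def by auto
    then have l0k: "l0 < k" and m0: "m0 < n - k" and c0: "c (l0, m0) \<noteq> 0" and inK: "(l0, m0) \<in> ?K"
      unfolding S_def keys_def by auto
    have minm: "m0 \<le> snd key" if "key \<in> S" for key unfolding m0_def using fS that by simp
    have minl: "l0 \<le> fst key" if "key \<in> S0" for key unfolding l0_def using fS0 that by simp
    have others: "c key * cf (?T key) (Suc l0) m0 = 0" if "key \<in> ?K - {(l0, m0)}" for key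
    proof (cases "c key = 0")
      case False
      obtain l m where key: "key = (l, m)" by force
      have kK: "key \<in> ?K" using that by auto
      show ?thesis
      proof (cases "l = k")
        case True
        then have "m = n - k" using kK key l0k by (auto simp: keys_def)
        then show ?thesis using cf_TT[OF kn kK] key m0 by simp
      next
        case lk: False
        then have "key \<in> S" using kK False key unfolding S_def keys_def by auto
        then have mm: "m0 \<le> m" using minm key by force
        show ?thesis
        proof (cases "l \<le> Suc l0 \<and> m \<le> m0")
          case True
          then have "m = m0" using mm by simp
          then have "key \<in> S0" using \<open>key \<in> S\<close> key unfolding S0_def by simp
          then have "l0 \<le> l" using minl key by force
          moreover have "l \<noteq> l0" using that key \<open>m = m0\<close> by auto
          ultimately have "l = Suc l0" using True by simp
          moreover have "l < k" using kK key lk by (auto simp: keys_def)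
          ultimately have "0 < n - l - m" using \<open>m = m0\<close> m0 by linarith
          then have "cf (Tab (k - l) (n - l - m)) 0 0 = 0" by (rule Tab_00)
          then show ?thesis using cf_TT[OF kn kK] key \<open>l = Suc l0\<close> \<open>m = m0\<close> by simp
        next
          case False
          have "cf (?T key) (Suc l0) m0 = 0" using False cf_TT[OF kn kK] unfolding key by auto
          then show ?thesis by simp
        qed
      qed
    qed simp
    have "0 = (\<Sum>key\<in>?K. c key * cf (?T key) (Suc l0) m0)" using cfz by simp
    also have "\<dots> = c (l0, m0) * cf (?T (l0, m0)) (Suc l0) m0 + (\<Sum>key\<in>?K - {(l0, m0)}. c key * cf (?T key) (Suc l0) m0)"
      using finite_keys inK by (simp add: sum.remove)
    also have "(\<Sum>key\<in>?K - {(l0, m0)}. c key * cf (?T key) (Suc l0) m0) = 0"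
      using others by (intro sum.neutral) blast
    also have "cf (?T (l0, m0)) (Suc l0) m0 = cf (Tab (k - l0) (n - l0 - m0)) 1 0"
      using cf_TT[OF kn inK] by simp
    finally have "0 = c (l0, m0) * cf (Tab (k - l0) (n - l0 - m0)) 1 0" by simp
    moreover have "cf (Tab (k - l0) (n - l0 - m0)) 1 0 \<noteq> 0"
      using l0k m0 by (intro Tab_10) linarith+
    ultimately show False using c0 by simp
  qed
  have degK: "(k, n - k) \<in> ?K" by (simp add: keys_def)
  have cnd: "c key = 0" if "key \<in> ?K" "key \<noteq> (k, n - k)" for key
    using that nd unfolding S_def keys_def by auto
  have "0 = (\<Sum>key\<in>?K. c key * cf (?T key) k (n - k))" using cfz by simp
  also have "\<dots> = c (k, n - k) * cf (?T (k, n - k)) k (n - k) + (\<Sum>key\<in>?K - {(k, n - k)}. c key * cf (?T key) k (n - k))"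
    using finite_keys degK by (simp add: sum.remove)
  also have "(\<Sum>key\<in>?K - {(k, n - k)}. c key * cf (?T key) k (n - k)) = 0"
    using cnd by (intro sum.neutral) auto
  also have "cf (?T (k, n - k)) k (n - k) = 1"
    using cf_TT[OF kn degK] by (simp add: Tab_0_0 cf_def)
  finally have "c (k, n - k) = 0" by simp
  then show ?thesis using cnd by metis
qed

definition kap :: "nat \<Rightarrow> nat \<Rightarrow> nat \<times> nat \<Rightarrow> nat \<times> nat" where
  "kap k n p = (if fst p < k \<and> snd p < n - k then p else (k, n - k))"

lemma kap_image: "k \<le> n \<Longrightarrow> kap k n ` form_params k n = keys k n"
proof
  assume kn: "k \<le> n"
  show "kap k n ` form_params k n \<subseteq> keys k n"
    by (auto simp: kap_def keys_def)
  show "keys k n \<subseteq> kap k n ` form_params k n"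
  proof
    fix key assume "key \<in> keys k n"
    then have "key \<in> form_params k n" "kap k n key = key" using kn keys_params by (auto simp: keys_def kap_def)
    then show "key \<in> kap k n ` form_params k n" by (metis image_eqI)
  qed
qed

lemma form_kap: "p \<in> form_params k n \<Longrightarrow> form_matroid k n p = form_matroid k n (kap k n p)"
proof -
  assume p: "p \<in> form_params k n"
  obtain l m where pe: "p = (l, m)" by force
  have h: "l \<le> k" "m + k \<le> n" using p pe by (auto simp: form_params_def)
  show ?thesis
  proof (cases "l < k \<and> m < n - k")
    case True
    then show ?thesis by (simp add: kap_def pe)
  next
    case False
    then have "l = k \<or> m = n - k" using h by auto
    then show ?thesis using form_degenerate[OF h] False by (simp add: kap_def pe)
  qed
qed

lemma iso_refl: "matroid_iso M M"
  unfolding matroid_iso_def by (rule exI[of _ id]) auto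

lemma card_keys: "k \<le> n \<Longrightarrow> card (keys k n) = k * (n - k) + 1"
proof -
  assume kn: "k \<le> n"
  have e: "keys k n = insert (k, n - k) ({..<k} \<times> {..<n - k})" by (auto simp: keys_def)
  have "(k, n - k) \<notin> {..<k} \<times> {..<n - k}" by auto
  then show ?thesis unfolding e by (simp add: card_cartesian_product)
qed

theorem proposition4p10:
  fixes k n :: nat
  assumes "k \<le> n"
  shows "(\<forall>p \<in> form_params k n. is_matroid (form_matroid k n p) \<and>
            card (ground (form_matroid k n p)) = n \<and>
            matroid_rank (form_matroid k n p) = k)
       \<and> card (form_classes k n) = k * (n - k) + 1
       \<and> (\<forall>rep. (\<forall>C \<in> form_classes k n. rep C \<in> C) \<longrightarrow>
              int_lin_indep (\<lambda>C. tutte_poly (rep C)) (form_classes k n))"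
proof -
  have kn: "k \<le> n" by (rule assms)
  let ?K = "keys k n"
  let ?T = "\<lambda>key. tutte_poly (form_matroid k n key)"
  define phi where "phi key = iso_class (form_matroid k n key)" for key
  have P1: "\<forall>p \<in> form_params k n. is_matroid (form_matroid k n p) \<and>
            card (ground (form_matroid k n p)) = n \<and> matroid_rank (form_matroid k n p) = k"
  proof
    fix p assume "p \<in> form_params k n"
    then obtain l m where pe: "p = (l, m)" and h: "l \<le> k" "m + k \<le> n" by (auto simp: form_params_def)
    show "is_matroid (form_matroid k n p) \<and> card (ground (form_matroid k n p)) = n \<and>
      matroid_rank (form_matroid k n p) = k" unfolding pe using form_props[OF h] by simp
  qed
  have FC: "form_classes k n = phi ` ?K"
  proof -
    have "form_classes k n = (\<lambda>p. phi (kap k n p)) ` form_params k n"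
      unfolding form_classes_def
    proof (rule image_cong[OF refl])
      fix p assume p: "p \<in> form_params k n"
      show "iso_class (form_matroid k n p) = phi (kap k n p)"
        unfolding phi_def using form_kap[OF p] by (rule arg_cong)
    qed
    also have "\<dots> = phi ` (kap k n ` form_params k n)" by (rule image_image[symmetric])
    also have "\<dots> = phi ` ?K" unfolding kap_image[OF kn] ..
    finally show ?thesis .
  qed
  have mem: "form_matroid k n key \<in> phi key" if "key \<in> ?K" for key
  proof -
    have "is_matroid (form_matroid k n key)" using P1 keys_params[OF kn that] by blast
    then show ?thesis unfolding phi_def iso_class_def using iso_refl by simp
  qed
  have Tcl: "tutte_poly X = ?T key" if "key \<in> ?K" "X \<in> phi key" for key X
  proof -
    have "matroid_iso X (form_matroid k n key)" using that(2) by (simp add: phi_def iso_class_def)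
    then show ?thesis by (rule iso_tutte)
  qed
  have inj: "inj_on phi ?K"
  proof (rule inj_onI, rule ccontr)
    fix k1 k2 assume k1: "k1 \<in> ?K" and k2: "k2 \<in> ?K" and eq: "phi k1 = phi k2" and ne: "k1 \<noteq> k2"
    have TT: "?T k1 = ?T k2" using Tcl[OF k2, of "form_matroid k n k1"] mem[OF k1] eq by simp
    define c where "c x = (if x = k1 then 1 else if x = k2 then -1 else (0::int))" for x
    have "of_int (c x) * ?T x = (if x = k1 then ?T k1 else 0) - (if x = k2 then ?T k2 else 0)" for x
      using ne by (simp add: c_def)
    then have "(\<Sum>x\<in>?K. of_int (c x) * ?T x) = (\<Sum>x\<in>?K. (if x = k1 then ?T k1 else 0)) - (\<Sum>x\<in>?K. (if x = k2 then ?T k2 else 0))"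
      by (simp add: sum_subtractf)
    also have "\<dots> = 0" using k1 k2 TT finite_keys by simp
    finally have "\<forall>x\<in>?K. c x = 0" by (rule lin_keys[OF kn])
    then have "c k1 = 0" using k1 by blast
    then show False by (simp add: c_def)
  qed
  have P2: "card (form_classes k n) = k * (n - k) + 1"
    unfolding FC using card_image[OF inj] card_keys[OF kn] by simp
  have P3: "int_lin_indep (\<lambda>C. tutte_poly (rep C)) (form_classes k n)"
    if rep: "\<forall>C \<in> form_classes k n. rep C \<in> C" for rep
    unfolding int_lin_indep_def
  proof (intro allI impI)
    fix c :: "nat matroid set \<Rightarrow> int"
    assume z: "(\<Sum>C\<in>form_classes k n. of_int (c C) * tutte_poly (rep C)) = 0"
    have "(\<Sum>C\<in>form_classes k n. of_int (c C) * tutte_poly (rep C)) =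
        (\<Sum>key\<in>?K. of_int (c (phi key)) * tutte_poly (rep (phi key)))"
      unfolding FC by (rule sum.reindex[OF inj, unfolded comp_def])
    also have "\<dots> = (\<Sum>key\<in>?K. of_int (c (phi key)) * ?T key)"
    proof (rule sum.cong[OF refl])
      fix key assume kK: "key \<in> ?K"
      have "rep (phi key) \<in> phi key" using rep FC kK by blast
      then show "of_int (c (phi key)) * tutte_poly (rep (phi key)) = of_int (c (phi key)) * ?T key"
        using Tcl[OF kK] by simp
    qed
    finally have "\<forall>key\<in>?K. c (phi key) = 0" using z by (intro lin_keys[OF kn]) simp
    then show "\<forall>C\<in>form_classes k n. c C = 0" unfolding FC by blast
  qed
  show ?thesis using P1 P2 P3 by blast
qed

end
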